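(* Let $\Omega$ be a set and let $G=H\times K\leq{\rm Sym}(\Omega)$ be a finite group which is the internal direct product of subgroups $H\neq 1$ and $K\neq 1$, with $H$ abelian. Then $H$ is a normal subgroup of $G^{(2),\Omega}$. Furthermore, if $\gcd(|H|,|K|)=1$, then $H$ acts intransitively on $\Omega$, and, with $\overline{\Omega}:=\{\alpha^H\mid\alpha\in\Omega\}$ and the action $(\alpha^H)^x=(\alpha^x)^H$ of $G^{(2),\Omega}$ (and of $G$) on $\overline{\Omega}$, the kernel of the action of $G$ on $\overline{\Omega}$ is $H$ and the kernel of the action of $G^{(2),\Omega}$ on $\overline{\Omega}$ is $H^{(2),\Omega}$; that is, $G/H$ and $G^{(2),\Omega}/H^{(2),\Omega}$ both act faithfully on $\overline{\Omega}$.
   Context: Permutations act on the right. For $X\leq{\rm Sym}(\Omega)$, the $2$-closure of $X$ on $\Omega$ is $X^{(2),\Omega}=\{\theta\in{\rm Sym}(\Omega)\mid \forall \alpha,\beta\in\Omega\ \exists g\in X:\ \alpha^\theta=\alpha^g,\ \beta^\theta=\beta^g\}$; it is a subgroup of ${\rm Sym}(\Omega)$ containing $X$. $\alpha^H$ denotes the $H$-orbit of $\alpha$. *)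

theory Defs
  imports "HOL-Algebra.Algebra"
begin

text \<open>Permutations of Om are the elements of carrier (BijGroup Om) (extensional bijections).
  The image of a point a under a permutation g is written g a.\<close>

definition two_closure :: "'a set \<Rightarrow> ('a \<Rightarrow> 'a) set \<Rightarrow> ('a \<Rightarrow> 'a) set" where
  "two_closure Om Y = {th \<in> carrier (BijGroup Om).
      \<forall>a\<in>Om. \<forall>b\<in>Om. \<exists>g\<in>Y. th a = g a \<and> th b = g b}"

definition perm_orbit :: "('a \<Rightarrow> 'a) set \<Rightarrow> 'a \<Rightarrow> 'a set" where
  "perm_orbit H a = {h a | h. h \<in> H}"

definition internal_direct_product :: "'a set \<Rightarrow> ('a \<Rightarrow> 'a) set \<Rightarrow> ('a \<Rightarrow> 'a) set \<Rightarrow> ('a \<Rightarrow> 'a) set \<Rightarrow> bool" where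
  "internal_direct_product Om G H K \<longleftrightarrow>
     subgroup G (BijGroup Om) \<and> subgroup H (BijGroup Om) \<and> subgroup K (BijGroup Om) \<and>
     H <#>\<^bsub>BijGroup Om\<^esub> K = G \<and>
     H \<inter> K = {\<one>\<^bsub>BijGroup Om\<^esub>} \<and>
     (\<forall>h\<in>H. \<forall>k\<in>K. h \<otimes>\<^bsub>BijGroup Om\<^esub> k = k \<otimes>\<^bsub>BijGroup Om\<^esub> h)"

end

theory Submission
  imports Defs
begin

locale mt15 =
  fixes Om :: "'a set" and G H K :: "('a \<Rightarrow> 'a) set"
  assumes finG: "finite G" and idp: "internal_direct_product Om G H K"
    and abH: "\<forall>x\<in>H. \<forall>y\<in>H. x \<otimes>\<^bsub>BijGroup Om\<^esub> y = y \<otimes>\<^bsub>BijGroup Om\<^esub> x"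
begin

abbreviation "B \<equiv> BijGroup Om"

sublocale BG: group B by (rule group_BijGroup)

lemma sgG: "subgroup G B" and sgH: "subgroup H B" and sgK: "subgroup K B"
  and HK: "H <#>\<^bsub>B\<^esub> K = G" and HcapK: "H \<inter> K = {\<one>\<^bsub>B\<^esub>}"
  and commHK: "\<And>h k. h \<in> H \<Longrightarrow> k \<in> K \<Longrightarrow> h \<otimes>\<^bsub>B\<^esub> k = k \<otimes>\<^bsub>B\<^esub> h"
  using idp unfolding internal_direct_product_def by auto

lemma cH: "h \<in> H \<Longrightarrow> h \<in> carrier B" by (rule subgroup.mem_carrier[OF sgH])
lemma cK: "h \<in> K \<Longrightarrow> h \<in> carrier B" by (rule subgroup.mem_carrier[OF sgK])
lemma cG: "h \<in> G \<Longrightarrow> h \<in> carrier B" by (rule subgroup.mem_carrier[OF sgG])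

lemma app: "x \<in> carrier B \<Longrightarrow> y \<in> carrier B \<Longrightarrow> a \<in> Om \<Longrightarrow> (x \<otimes>\<^bsub>B\<^esub> y) a = x (y a)"
  by (simp add: BijGroup_def compose_def)

lemma one_app: "a \<in> Om \<Longrightarrow> \<one>\<^bsub>B\<^esub> a = a"
  by (simp add: BijGroup_def)

lemma carB: "carrier B = Bij Om" by (simp add: BijGroup_def)

lemma fext: "x \<in> carrier B \<Longrightarrow> y \<in> carrier B \<Longrightarrow> (\<forall>a\<in>Om. x a = y a) \<Longrightarrow> x = y"
  unfolding carB by (intro extensionalityI[of x Om y]) (auto dest: Bij_imp_extensional)

lemma fmap: "x \<in> carrier B \<Longrightarrow> a \<in> Om \<Longrightarrow> x a \<in> Om"
  unfolding carB by (drule Bij_imp_funcset) (erule funcset_mem)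

lemma inv_app: "x \<in> carrier B \<Longrightarrow> a \<in> Om \<Longrightarrow> (inv\<^bsub>B\<^esub> x) (x a) = a"
  using app[of "inv\<^bsub>B\<^esub> x" x a] one_app[of a] by simp

lemma app_inv: "x \<in> carrier B \<Longrightarrow> a \<in> Om \<Longrightarrow> x ((inv\<^bsub>B\<^esub> x) a) = a"
  using app[of x "inv\<^bsub>B\<^esub> x" a] one_app[of a] by simp

lemma HsubG: "H \<subseteq> G"
proof
  fix h assume "h \<in> H"
  have "h \<otimes>\<^bsub>B\<^esub> \<one>\<^bsub>B\<^esub> \<in> H <#>\<^bsub>B\<^esub> K"
    unfolding set_mult_def using \<open>h \<in> H\<close> subgroup.one_closed[OF sgK] by blast
  moreover have "h \<in> carrier B" using \<open>h \<in> H\<close> by (rule cH)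
  ultimately show "h \<in> G" using HK by simp
qed

lemma decomp: assumes "g \<in> G" shows "\<exists>h\<in>H. \<exists>k\<in>K. g = h \<otimes>\<^bsub>B\<^esub> k"
proof -
  have "g \<in> (\<Union>h\<in>H. \<Union>k\<in>K. {h \<otimes>\<^bsub>B\<^esub> k})" using assms HK by (simp only: set_mult_def)
  then show ?thesis by auto
qed

lemma central: assumes "h \<in> H" "g \<in> G" shows "h \<otimes>\<^bsub>B\<^esub> g = g \<otimes>\<^bsub>B\<^esub> h"
proof -
  obtain h' k where hk: "h' \<in> H" "k \<in> K" "g = h' \<otimes>\<^bsub>B\<^esub> k" using decomp assms by blast
  have c: "h \<in> carrier B" "h' \<in> carrier B" "k \<in> carrier B"
    using assms hk cH cK by auto
  have "h \<otimes>\<^bsub>B\<^esub> (h' \<otimes>\<^bsub>B\<^esub> k) = (h \<otimes>\<^bsub>B\<^esub> h') \<otimes>\<^bsub>B\<^esub> k" using c BG.m_assoc by simp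
  also have "\<dots> = (h' \<otimes>\<^bsub>B\<^esub> h) \<otimes>\<^bsub>B\<^esub> k" using abH assms(1) hk(1) by simp
  also have "\<dots> = h' \<otimes>\<^bsub>B\<^esub> (h \<otimes>\<^bsub>B\<^esub> k)" using c BG.m_assoc by simp
  also have "\<dots> = h' \<otimes>\<^bsub>B\<^esub> (k \<otimes>\<^bsub>B\<^esub> h)" using commHK[OF assms(1) hk(2)] by simp
  also have "\<dots> = (h' \<otimes>\<^bsub>B\<^esub> k) \<otimes>\<^bsub>B\<^esub> h" using c BG.m_assoc by simp
  finally show ?thesis using hk by simp
qed

lemma tc_sub: assumes "subgroup Y B" shows "subgroup (two_closure Om Y) B"
proof (rule BG.subgroupI)
  show "two_closure Om Y \<subseteq> carrier B" unfolding two_closure_def by auto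
  have "\<one>\<^bsub>B\<^esub> \<in> two_closure Om Y" unfolding two_closure_def
    using assms subgroup.one_closed[OF assms] by blast
  then show "two_closure Om Y \<noteq> {}" by blast
next
  fix t assume t: "t \<in> two_closure Om Y"
  then have tc: "t \<in> carrier B" unfolding two_closure_def by auto
  show "inv\<^bsub>B\<^esub> t \<in> two_closure Om Y" unfolding two_closure_def
  proof (intro CollectI conjI ballI)
    show "inv\<^bsub>B\<^esub> t \<in> carrier B" using tc by simp
    fix a b assume ab: "a \<in> Om" "b \<in> Om"
    define a' where "a' = (inv\<^bsub>B\<^esub> t) a"
    define b' where "b' = (inv\<^bsub>B\<^esub> t) b"
    have ab': "a' \<in> Om" "b' \<in> Om" using ab tc fmap a'_def b'_def by auto
    obtain g where g: "g \<in> Y" "t a' = g a'" "t b' = g b'" using t ab' unfolding two_closure_def by blast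
    have gc: "g \<in> carrier B" by (rule subgroup.mem_carrier[OF assms g(1)])
    have "t a' = a" "t b' = b" using app_inv tc ab a'_def b'_def by auto
    then have "(inv\<^bsub>B\<^esub> g) a = a'" "(inv\<^bsub>B\<^esub> g) b = b'" using g gc inv_app ab' by auto
    moreover have "inv\<^bsub>B\<^esub> g \<in> Y" by (rule subgroup.m_inv_closed[OF assms g(1)])
    ultimately show "\<exists>g\<in>Y. (inv\<^bsub>B\<^esub> t) a = g a \<and> (inv\<^bsub>B\<^esub> t) b = g b" using a'_def b'_def by metis
  qed
next
  fix s t assume s: "s \<in> two_closure Om Y" and t: "t \<in> two_closure Om Y"
  then have sc: "s \<in> carrier B" and tc: "t \<in> carrier B" unfolding two_closure_def by auto
  show "s \<otimes>\<^bsub>B\<^esub> t \<in> two_closure Om Y" unfolding two_closure_def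
  proof (intro CollectI conjI ballI)
    show "s \<otimes>\<^bsub>B\<^esub> t \<in> carrier B" using sc tc by simp
    fix a b assume ab: "a \<in> Om" "b \<in> Om"
    obtain g2 where g2: "g2 \<in> Y" "t a = g2 a" "t b = g2 b" using t ab unfolding two_closure_def by blast
    have g2c: "g2 \<in> carrier B" by (rule subgroup.mem_carrier[OF assms g2(1)])
    have m: "g2 a \<in> Om" "g2 b \<in> Om" using g2c ab fmap by auto
    obtain g1 where g1: "g1 \<in> Y" "s (g2 a) = g1 (g2 a)" "s (g2 b) = g1 (g2 b)"
      using s m unfolding two_closure_def by blast
    have g1c: "g1 \<in> carrier B" by (rule subgroup.mem_carrier[OF assms g1(1)])
    have "(s \<otimes>\<^bsub>B\<^esub> t) a = (g1 \<otimes>\<^bsub>B\<^esub> g2) a" "(s \<otimes>\<^bsub>B\<^esub> t) b = (g1 \<otimes>\<^bsub>B\<^esub> g2) b"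
      using app sc tc g1c g2c ab g1 g2 by auto
    moreover have "g1 \<otimes>\<^bsub>B\<^esub> g2 \<in> Y" by (rule subgroup.m_closed[OF assms g1(1) g2(1)])
    ultimately show "\<exists>g\<in>Y. (s \<otimes>\<^bsub>B\<^esub> t) a = g a \<and> (s \<otimes>\<^bsub>B\<^esub> t) b = g b" by blast
  qed
qed

lemma tc_comm: assumes t: "t \<in> two_closure Om G" and h: "h \<in> H"
  shows "t \<otimes>\<^bsub>B\<^esub> h = h \<otimes>\<^bsub>B\<^esub> t"
proof -
  have tc: "t \<in> carrier B" using t unfolding two_closure_def by auto
  have hc: "h \<in> carrier B" using h by (rule cH)
  show ?thesis
  proof (rule fext)
    show "t \<otimes>\<^bsub>B\<^esub> h \<in> carrier B" "h \<otimes>\<^bsub>B\<^esub> t \<in> carrier B" using tc hc by auto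
    show "\<forall>a\<in>Om. (t \<otimes>\<^bsub>B\<^esub> h) a = (h \<otimes>\<^bsub>B\<^esub> t) a"
    proof
      fix a assume a: "a \<in> Om"
      have ha: "h a \<in> Om" using hc a fmap by auto
      obtain g where g: "g \<in> G" "t a = g a" "t (h a) = g (h a)" using t a ha unfolding two_closure_def by blast
      have gc: "g \<in> carrier B" using g(1) by (rule cG)
      have "(t \<otimes>\<^bsub>B\<^esub> h) a = g (h a)" using app tc hc a g by simp
      also have "\<dots> = (g \<otimes>\<^bsub>B\<^esub> h) a" using app gc hc a by simp
      also have "\<dots> = (h \<otimes>\<^bsub>B\<^esub> g) a" using central h g by simp
      also have "\<dots> = (h \<otimes>\<^bsub>B\<^esub> t) a" using app gc hc tc a g by simp
      finally show "(t \<otimes>\<^bsub>B\<^esub> h) a = (h \<otimes>\<^bsub>B\<^esub> t) a" .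
    qed
  qed
qed

lemma part1: "H \<lhd> B\<lparr>carrier := two_closure Om G\<rparr>"
proof -
  have sgT: "subgroup (two_closure Om G) B" using tc_sub sgG by blast
  have HT: "H \<subseteq> two_closure Om G"
  proof
    fix h assume h: "h \<in> H"
    then have "h \<in> G" "h \<in> carrier B" using HsubG cH by blast+
    then show "h \<in> two_closure Om G" unfolding two_closure_def by blast
  qed
  have grp: "group (B\<lparr>carrier := two_closure Om G\<rparr>)" using BG.subgroup_imp_group sgT by blast
  show ?thesis
  proof (rule group.normalI[OF grp])
    show "subgroup H (B\<lparr>carrier := two_closure Om G\<rparr>)" using BG.subgroup_incl sgH sgT HT by blast
    show "\<forall>x\<in>carrier (B\<lparr>carrier := two_closure Om G\<rparr>).
       H #>\<^bsub>B\<lparr>carrier := two_closure Om G\<rparr>\<^esub> x = x <#\<^bsub>B\<lparr>carrier := two_closure Om G\<rparr>\<^esub> H"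
    proof
      fix x assume "x \<in> carrier (B\<lparr>carrier := two_closure Om G\<rparr>)"
      then have x: "x \<in> two_closure Om G" by simp
      show "H #>\<^bsub>B\<lparr>carrier := two_closure Om G\<rparr>\<^esub> x = x <#\<^bsub>B\<lparr>carrier := two_closure Om G\<rparr>\<^esub> H"
        unfolding r_coset_def l_coset_def by (simp add: tc_comm[OF x])
    qed
  qed
qed


lemma finH: "finite H" using finG HsubG finite_subset by blast
lemma finK: "finite K"
proof -
  have "K \<subseteq> G"
  proof
    fix k assume k: "k \<in> K"
    have "\<one>\<^bsub>B\<^esub> \<otimes>\<^bsub>B\<^esub> k \<in> H <#>\<^bsub>B\<^esub> K"
      unfolding set_mult_def using k subgroup.one_closed[OF sgH] by blast
    moreover have "k \<in> carrier B" using k by (rule cK)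
    ultimately show "k \<in> G" using HK by simp
  qed
  then show ?thesis using finG finite_subset by blast
qed

lemma powH: "h \<in> H \<Longrightarrow> h [^]\<^bsub>B\<^esub> card H = \<one>\<^bsub>B\<^esub>"
proof -
  assume h: "h \<in> H"
  interpret GH: group "B\<lparr>carrier := H\<rparr>" using BG.subgroup_imp_group[OF sgH] .
  have "h [^]\<^bsub>B\<lparr>carrier := H\<rparr>\<^esub> order (B\<lparr>carrier := H\<rparr>) = \<one>\<^bsub>B\<lparr>carrier := H\<rparr>\<^esub>"
    using h by (intro GH.pow_order_eq_1) simp
  then show ?thesis by (simp add: order_def BG.nat_pow_consistent[symmetric])
qed

lemma powK: "h \<in> K \<Longrightarrow> h [^]\<^bsub>B\<^esub> card K = \<one>\<^bsub>B\<^esub>"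
proof -
  assume h: "h \<in> K"
  interpret GH: group "B\<lparr>carrier := K\<rparr>" using BG.subgroup_imp_group[OF sgK] .
  have "h [^]\<^bsub>B\<lparr>carrier := K\<rparr>\<^esub> order (B\<lparr>carrier := K\<rparr>) = \<one>\<^bsub>B\<lparr>carrier := K\<rparr>\<^esub>"
    using h by (intro GH.pow_order_eq_1) simp
  then show ?thesis by (simp add: order_def BG.nat_pow_consistent[symmetric])
qed

lemma pow_fix: "f \<in> carrier B \<Longrightarrow> a \<in> Om \<Longrightarrow> f a = a \<Longrightarrow> (f [^]\<^bsub>B\<^esub> (n::nat)) a = a"
  by (induction n) (simp_all add: one_app app)

lemma L: assumes cop: "coprime (card H) (card K)" and k: "k \<in> K" and a: "a \<in> Om"
  and h0: "h0 \<in> H" and eq: "k a = h0 a"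
  shows "k a = a"
proof -
  have kc: "k \<in> carrier B" using k by (rule cK)
  have hc: "h0 \<in> carrier B" using h0 by (rule cH)
  define f where "f = inv\<^bsub>B\<^esub> h0 \<otimes>\<^bsub>B\<^esub> k"
  have fc: "f \<in> carrier B" using kc hc f_def by simp
  have fa: "f a = a" using f_def app kc hc a eq inv_app by simp
  have k1: "h0 \<otimes>\<^bsub>B\<^esub> f = k" using f_def kc hc by (simp add: BG.m_assoc[symmetric])
  have "f \<otimes>\<^bsub>B\<^esub> h0 = inv\<^bsub>B\<^esub> h0 \<otimes>\<^bsub>B\<^esub> (k \<otimes>\<^bsub>B\<^esub> h0)" using f_def kc hc by (simp add: BG.m_assoc)
  also have "\<dots> = inv\<^bsub>B\<^esub> h0 \<otimes>\<^bsub>B\<^esub> (h0 \<otimes>\<^bsub>B\<^esub> k)" using commHK[OF h0 k] by simp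
  also have "\<dots> = k" using kc hc by (simp add: BG.m_assoc[symmetric])
  finally have comm: "h0 \<otimes>\<^bsub>B\<^esub> f = f \<otimes>\<^bsub>B\<^esub> h0" using k1 by simp
  have "card H \<noteq> 0" using finH subgroup.one_closed[OF sgH] by auto
  then obtain x y where xy: "card H * x = card K * y + gcd (card H) (card K)" using bezout_nat by blast
  then have xy: "card H * x = card K * y + 1" using cop by simp
  have "k [^]\<^bsub>B\<^esub> (card H * x) = h0 [^]\<^bsub>B\<^esub> (card H * x) \<otimes>\<^bsub>B\<^esub> f [^]\<^bsub>B\<^esub> (card H * x)"
    using BG.pow_mult_distrib[OF comm hc fc] k1 by simp
  also have "\<dots> = f [^]\<^bsub>B\<^esub> (card H * x)"
    using powH[OF h0] hc fc by (simp add: BG.nat_pow_pow[symmetric])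
  finally have e1: "k [^]\<^bsub>B\<^esub> (card H * x) = f [^]\<^bsub>B\<^esub> (card H * x)" .
  have "k [^]\<^bsub>B\<^esub> (card H * x) = k [^]\<^bsub>B\<^esub> (card K * y) \<otimes>\<^bsub>B\<^esub> k [^]\<^bsub>B\<^esub> (1::nat)"
    using xy kc by (simp add: BG.nat_pow_mult)
  also have "\<dots> = k" using powK[OF k] kc by (simp add: BG.nat_pow_pow[symmetric])
  finally have "k = f [^]\<^bsub>B\<^esub> (card H * x)" using e1 by simp
  then show ?thesis using pow_fix[OF fc a fa] by simp
qed

lemma orbit_mem: assumes "a \<in> Om" shows "a \<in> perm_orbit H a"
proof -
  have "a = \<one>\<^bsub>B\<^esub> a" using one_app assms by simp
  then show ?thesis unfolding perm_orbit_def using subgroup.one_closed[OF sgH] by blast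
qed

lemma orbit_same: assumes h: "h \<in> H" and a: "a \<in> Om" shows "perm_orbit H (h a) = perm_orbit H a"
proof -
  have hc: "h \<in> carrier B" using h by (rule cH)
  show ?thesis unfolding perm_orbit_def
  proof (intro equalityI subsetI)
    fix z assume "z \<in> {h' (h a) |h'. h' \<in> H}"
    then obtain h' where h': "h' \<in> H" "z = h' (h a)" by blast
    have "z = (h' \<otimes>\<^bsub>B\<^esub> h) a" using h' app cH hc a by simp
    moreover have "h' \<otimes>\<^bsub>B\<^esub> h \<in> H" by (rule subgroup.m_closed[OF sgH h'(1) h])
    ultimately show "z \<in> {h' a |h'. h' \<in> H}" by blast
  next
    fix z assume "z \<in> {h' a |h'. h' \<in> H}"
    then obtain h' where h': "h' \<in> H" "z = h' a" by blast
    have "z = (h' \<otimes>\<^bsub>B\<^esub> inv\<^bsub>B\<^esub> h) (h a)" using h' app cH hc a fmap inv_app by simp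
    moreover have "h' \<otimes>\<^bsub>B\<^esub> inv\<^bsub>B\<^esub> h \<in> H"
      by (rule subgroup.m_closed[OF sgH h'(1) subgroup.m_inv_closed[OF sgH h]])
    ultimately show "z \<in> {h' (h a) |h'. h' \<in> H}" by blast
  qed
qed

lemma L2: assumes cop: "coprime (card H) (card K)" and k: "k \<in> K" and a: "a \<in> Om"
  and h: "h \<in> H" and mem: "(h \<otimes>\<^bsub>B\<^esub> k) a \<in> perm_orbit H a"
  shows "k a = a"
proof -
  obtain h1 where h1: "h1 \<in> H" "(h \<otimes>\<^bsub>B\<^esub> k) a = h1 a" using mem unfolding perm_orbit_def by blast
  have kc: "k \<in> carrier B" using k by (rule cK)
  have hc: "h \<in> carrier B" using h by (rule cH)
  have "k a = (inv\<^bsub>B\<^esub> h) ((h \<otimes>\<^bsub>B\<^esub> k) a)" using app kc hc a fmap inv_app by simp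
  also have "\<dots> = (inv\<^bsub>B\<^esub> h \<otimes>\<^bsub>B\<^esub> h1) a" using h1 app hc cH a by simp
  finally have "k a = (inv\<^bsub>B\<^esub> h \<otimes>\<^bsub>B\<^esub> h1) a" .
  moreover have "inv\<^bsub>B\<^esub> h \<otimes>\<^bsub>B\<^esub> h1 \<in> H"
    by (rule subgroup.m_closed[OF sgH subgroup.m_inv_closed[OF sgH h] h1(1)])
  ultimately show ?thesis using L[OF cop k a] by blast
qed


lemma part2a: assumes cop: "coprime (card H) (card K)" and Kn: "K \<noteq> {\<one>\<^bsub>B\<^esub>}"
  shows "\<exists>a\<in>Om. perm_orbit H a \<noteq> Om"
proof (rule ccontr)
  assume "\<not> (\<exists>a\<in>Om. perm_orbit H a \<noteq> Om)"
  then have all: "\<And>a. a \<in> Om \<Longrightarrow> perm_orbit H a = Om" by blast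
  obtain k where k: "k \<in> K" "k \<noteq> \<one>\<^bsub>B\<^esub>" using Kn subgroup.one_closed[OF sgK] by blast
  have kc: "k \<in> carrier B" using k(1) by (rule cK)
  have "k = \<one>\<^bsub>B\<^esub>"
  proof (rule fext[OF kc BG.one_closed], intro ballI)
    fix b assume b: "b \<in> Om"
    have "k b \<in> perm_orbit H b" using all[OF b] fmap[OF kc b] by simp
    then obtain h0 where "h0 \<in> H" "k b = h0 b" unfolding perm_orbit_def by blast
    then have "k b = b" using L[OF cop k(1) b] by blast
    then show "k b = \<one>\<^bsub>B\<^esub> b" using one_app b by simp
  qed
  then show False using k by simp
qed

lemma part2b: assumes cop: "coprime (card H) (card K)"
  shows "{g \<in> G. \<forall>a\<in>Om. perm_orbit H (g a) = perm_orbit H a} = H"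
proof (intro equalityI subsetI)
  fix g assume "g \<in> {g \<in> G. \<forall>a\<in>Om. perm_orbit H (g a) = perm_orbit H a}"
  then have g: "g \<in> G" and orb: "\<And>a. a \<in> Om \<Longrightarrow> perm_orbit H (g a) = perm_orbit H a" by auto
  obtain h k where hk: "h \<in> H" "k \<in> K" "g = h \<otimes>\<^bsub>B\<^esub> k" using decomp[OF g] by blast
  have kc: "k \<in> carrier B" using hk(2) by (rule cK)
  have hc: "h \<in> carrier B" using hk(1) by (rule cH)
  have gc: "g \<in> carrier B" using g by (rule cG)
  have "k = \<one>\<^bsub>B\<^esub>"
  proof (rule fext[OF kc BG.one_closed], intro ballI)
    fix a assume a: "a \<in> Om"
    have "g a \<in> perm_orbit H a" using orb[OF a] orbit_mem[OF fmap[OF gc a]] by simp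
    then have "k a = a" using L2[OF cop hk(2) a hk(1)] hk(3) by simp
    then show "k a = \<one>\<^bsub>B\<^esub> a" using one_app a by simp
  qed
  then show "g \<in> H" using hk hc by simp
next
  fix h assume h: "h \<in> H"
  then show "h \<in> {g \<in> G. \<forall>a\<in>Om. perm_orbit H (g a) = perm_orbit H a}"
    using HsubG orbit_same by blast
qed

lemma part2c: assumes cop: "coprime (card H) (card K)"
  shows "{x \<in> two_closure Om G. \<forall>a\<in>Om. perm_orbit H (x a) = perm_orbit H a} = two_closure Om H"
proof (intro equalityI subsetI)
  fix t assume "t \<in> {x \<in> two_closure Om G. \<forall>a\<in>Om. perm_orbit H (x a) = perm_orbit H a}"
  then have t: "t \<in> two_closure Om G" and orb: "\<And>a. a \<in> Om \<Longrightarrow> perm_orbit H (t a) = perm_orbit H a" by auto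
  have tc: "t \<in> carrier B" using t unfolding two_closure_def by simp
  have key: "\<And>g a. g \<in> G \<Longrightarrow> a \<in> Om \<Longrightarrow> t a = g a \<Longrightarrow> \<exists>h\<in>H. \<exists>k\<in>K. g = h \<otimes>\<^bsub>B\<^esub> k \<and> k a = a"
  proof -
    fix g a assume g: "g \<in> G" and a: "a \<in> Om" and ta: "t a = g a"
    obtain h k where hk: "h \<in> H" "k \<in> K" "g = h \<otimes>\<^bsub>B\<^esub> k" using decomp[OF g] by blast
    have "t a \<in> perm_orbit H a" using orb[OF a] orbit_mem[OF fmap[OF tc a]] by simp
    then have "k a = a" using L2[OF cop hk(2) a hk(1)] hk(3) ta by simp
    then show "\<exists>h\<in>H. \<exists>k\<in>K. g = h \<otimes>\<^bsub>B\<^esub> k \<and> k a = a" using hk by blast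
  qed
  show "t \<in> two_closure Om H" unfolding two_closure_def
  proof (intro CollectI conjI ballI)
    show "t \<in> carrier B" by (rule tc)
    fix a b assume a: "a \<in> Om" and b: "b \<in> Om"
    obtain g where g: "g \<in> G" "t a = g a" "t b = g b" using t a b unfolding two_closure_def by blast
    obtain h k where hk: "h \<in> H" "k \<in> K" "g = h \<otimes>\<^bsub>B\<^esub> k" "k a = a" using key[OF g(1) a g(2)] by blast
    obtain h' k' where hk': "h' \<in> H" "k' \<in> K" "g = h' \<otimes>\<^bsub>B\<^esub> k'" "k' b = b" using key[OF g(1) b g(3)] by blast
    have "g b = h' b" using hk' app cH cK b by simp
    moreover have "g a = h a" using hk app cH cK a by simp
    moreover have "k' = k" and "h' = h"
    proof -
      have "h \<otimes>\<^bsub>B\<^esub> k = h' \<otimes>\<^bsub>B\<^esub> k'" using hk hk' by simp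
      then have "inv\<^bsub>B\<^esub> h' \<otimes>\<^bsub>B\<^esub> h = k' \<otimes>\<^bsub>B\<^esub> inv\<^bsub>B\<^esub> k"
        using hk hk' cH cK by (metis BG.inv_closed BG.inv_solve_left BG.inv_solve_right BG.m_assoc BG.m_closed)
      moreover have "inv\<^bsub>B\<^esub> h' \<otimes>\<^bsub>B\<^esub> h \<in> H"
        by (rule subgroup.m_closed[OF sgH subgroup.m_inv_closed[OF sgH hk'(1)] hk(1)])
      moreover have "k' \<otimes>\<^bsub>B\<^esub> inv\<^bsub>B\<^esub> k \<in> K"
        by (rule subgroup.m_closed[OF sgK hk'(2) subgroup.m_inv_closed[OF sgK hk(2)]])
      ultimately have e: "inv\<^bsub>B\<^esub> h' \<otimes>\<^bsub>B\<^esub> h = \<one>\<^bsub>B\<^esub>" "k' \<otimes>\<^bsub>B\<^esub> inv\<^bsub>B\<^esub> k = \<one>\<^bsub>B\<^esub>" using HcapK by auto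
      show "h' = h" using e(1) hk hk' cH by (metis BG.inv_closed BG.inv_equality BG.inv_inv)
      show "k' = k" using e(2) hk hk' cK by (metis BG.inv_closed BG.inv_equality BG.inv_inv BG.l_inv BG.m_assoc BG.r_one)
    qed
    ultimately show "\<exists>g\<in>H. t a = g a \<and> t b = g b" using g hk by metis
  qed
next
  fix t assume t: "t \<in> two_closure Om H"
  have tc: "t \<in> carrier B" using t unfolding two_closure_def by simp
  have "t \<in> two_closure Om G" using t HsubG unfolding two_closure_def by blast
  moreover have "\<forall>a\<in>Om. perm_orbit H (t a) = perm_orbit H a"
  proof
    fix a assume a: "a \<in> Om"
    obtain h where "h \<in> H" "t a = h a" using t a unfolding two_closure_def by blast
    then show "perm_orbit H (t a) = perm_orbit H a" using orbit_same a by simp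
  qed
  ultimately show "t \<in> {x \<in> two_closure Om G. \<forall>a\<in>Om. perm_orbit H (x a) = perm_orbit H a}" by simp
qed

end

theorem mainTheorem15:
  fixes Om :: "'a set" and G H K :: "('a \<Rightarrow> 'a) set"
  assumes "finite G"
    and "internal_direct_product Om G H K"
    and "H \<noteq> {\<one>\<^bsub>BijGroup Om\<^esub>}" and "K \<noteq> {\<one>\<^bsub>BijGroup Om\<^esub>}"
    and "\<forall>x\<in>H. \<forall>y\<in>H. x \<otimes>\<^bsub>BijGroup Om\<^esub> y = y \<otimes>\<^bsub>BijGroup Om\<^esub> x"
  shows "H \<lhd> (BijGroup Om)\<lparr>carrier := two_closure Om G\<rparr>
    \<and> (coprime (card H) (card K) \<longrightarrow>
           (\<exists>a\<in>Om. perm_orbit H a \<noteq> Om)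
         \<and> {g \<in> G. \<forall>a\<in>Om. perm_orbit H (g a) = perm_orbit H a} = H
         \<and> {x \<in> two_closure Om G. \<forall>a\<in>Om. perm_orbit H (x a) = perm_orbit H a}
             = two_closure Om H)"
proof -
  interpret M: mt15 Om G H K using assms(1,2,5) by (unfold_locales)
  show ?thesis using M.part1 M.part2a[OF _ assms(4)] M.part2b M.part2c by blast
qed

end
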